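(* Let $R\subseteq\mathbb{N}$ be a random set obtained by including each $n\in\mathbb{N}$ in $R$ independently with probability $1/2$. Then $R$ is rich with probability $1$.
   Context: A set $R\subseteq\mathbb{N}$ is rich if for all $s,u,v\in\mathbb{N}$, all $\bar a_0\in\{0,1\}^s\setminus\{\bar0\}$, $\bar a_1,\dots,\bar a_u\in\mathbb{N}^s$ and all $c_1,\dots,c_u\in\mathbb{N}$ with $(\bar a_0,0)\ne(\bar a_i,c_i)$ for all $i\in\{1,\dots,u\}$, there exist $\bar x,\bar y\in(v+\mathbb{N})^s$ (vectors with all entries $\ge v$) such that $\bar a_0^\top\bar x\in R\iff\bar a_0^\top\bar y\notin R$, and $\bar a_i^\top\bar x-c_i\in R\iff\bar a_i^\top\bar y-c_i\in R$ for all $i\in\{1,\dots,u\}$. *)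

theory Defs
  imports "HOL-Probability.Probability"
begin

text \<open>Vectors in N^s are represented as functions nat => nat, only indices j < s matter.
  The dot product of a and x over the first s coordinates.\<close>
definition dotp :: "nat \<Rightarrow> (nat \<Rightarrow> nat) \<Rightarrow> (nat \<Rightarrow> nat) \<Rightarrow> nat" where
  "dotp s a x = (\<Sum>j<s. a j * x j)"

text \<open>Richness. The vectors a_1..a_u are a i for i in {1..u}; the constants are c i.
  The expression a_i^T x - c_i is an integer; it lies in R only if it is a natural number in R.\<close>
definition rich :: "nat set \<Rightarrow> bool" where
  "rich R \<longleftrightarrow>
    (\<forall>s u v :: nat. \<forall>a0 :: nat \<Rightarrow> nat. \<forall>a :: nat \<Rightarrow> nat \<Rightarrow> nat. \<forall>c :: nat \<Rightarrow> nat.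
      (\<forall>j<s. a0 j \<in> {0, 1}) \<longrightarrow> (\<exists>j<s. a0 j \<noteq> 0) \<longrightarrow>
      (\<forall>i\<in>{1..u}. \<not> ((\<forall>j<s. a i j = a0 j) \<and> c i = 0)) \<longrightarrow>
      (\<exists>x y :: nat \<Rightarrow> nat. (\<forall>j<s. v \<le> x j \<and> v \<le> y j) \<and>
         (dotp s a0 x \<in> R \<longleftrightarrow> dotp s a0 y \<notin> R) \<and>
         (\<forall>i\<in>{1..u}. (int (dotp s (a i) x) - int (c i) \<in> int ` R
                        \<longleftrightarrow> int (dotp s (a i) y) - int (c i) \<in> int ` R))))"

text \<open>The random set: R = {n. w n} where w is drawn from the product of independent fair coins.\<close>
definition coin_space :: "(nat \<Rightarrow> bool) measure" where
  "coin_space = PiM UNIV (\<lambda>_::nat. measure_pmf (bernoulli_pmf (1/2)))"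

end

theory Submission
  imports Defs
begin


lemma trials_AE:
  fixes S :: "nat \<Rightarrow> nat set" and p :: "nat \<Rightarrow> nat" and m :: nat
  assumes fin: "\<And>k. finite (S k)" and card: "\<And>k. card (S k) \<le> m" and disj: "disjoint_family S"
  shows "AE w in coin_space. \<exists>k. \<forall>n\<in>S k. w n = (n = p k)"
proof -
  define Mc where "Mc = measure_pmf (bernoulli_pmf (1/2))"
  interpret P: product_prob_space "\<lambda>_::nat. Mc" UNIV
    unfolding Mc_def by (intro product_prob_spaceI measure_pmf.prob_space_axioms)
  let ?M = "PiM (UNIV::nat set) (\<lambda>_. Mc)"
  have cs: "coin_space = ?M" unfolding coin_space_def Mc_def ..
  have ind0: "P.indep_vars (\<lambda>_. Mc) (\<lambda>n w. w n) UNIV"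
  proof (subst P.indep_vars_iff_distr_eq_PiM)
    show "distr ?M (Pi\<^sub>M UNIV (\<lambda>_. Mc)) (\<lambda>x. \<lambda>i\<in>UNIV. x i) =
      Pi\<^sub>M UNIV (\<lambda>i. distr ?M Mc (\<lambda>w. w i))"
      by (simp add: P.PiM_component restrict_def cong: PiM_cong)
  qed auto
  have ind: "P.indep_vars (\<lambda>k. PiM (S k) (\<lambda>_. Mc)) (\<lambda>k w. restrict (\<lambda>i. w i) (S k)) UNIV"
    by (rule P.indep_vars_restrict[OF ind0]) (use disj in auto)
  define A where "A k = space (PiM (S k) (\<lambda>_. Mc)) - PiE (S k) (\<lambda>n. {n = p k})" for k
  have Asets: "A k \<in> sets (PiM (S k) (\<lambda>_. Mc))" for k
    unfolding A_def using fin by (intro sets.Diff sets.top sets_PiM_I_finite) (auto simp: Mc_def)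
  define F where "F k = (\<lambda>w. restrict (\<lambda>i. w i) (S k)) -` A k \<inter> space ?M" for k
  define q where "q = (1/2::real)^m"
  have q: "0 < q" "q \<le> 1" unfolding q_def by (auto simp: power_le_one)
  have Fk: "P.prob (F k) \<le> 1 - q" for k
  proof -
    have "F k = space ?M - prod_emb UNIV (\<lambda>_. Mc) (S k) (PiE (S k) (\<lambda>n. {n = p k}))"
      unfolding F_def A_def prod_emb_def by (auto simp: space_PiM Mc_def)
    moreover have "prod_emb UNIV (\<lambda>_. Mc) (S k) (PiE (S k) (\<lambda>n. {n = p k})) \<in> P.events"
      using fin by (intro measurable_prod_emb sets_PiM_I_finite) (auto simp: Mc_def)
    moreover have "P.prob (prod_emb UNIV (\<lambda>_. Mc) (S k) (PiE (S k) (\<lambda>n. {n = p k}))) = (1/2)^card (S k)"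
      using fin by (subst P.measure_PiM_emb) (auto simp: Mc_def measure_pmf_single)
    moreover have "q \<le> (1/2::real)^card (S k)"
      unfolding q_def using card by (intro power_decreasing) auto
    ultimately show ?thesis by (simp add: P.prob_compl)
  qed
  have bound: "P.prob (\<Inter>k\<in>{..<K}. F k) \<le> (1 - q)^K" if "K > 0" for K
  proof -
    have "P.prob (\<Inter>k\<in>{..<K}. F k) = (\<Prod>k\<in>{..<K}. P.prob (F k))"
      unfolding F_def using that by (intro P.indep_varsD[OF ind]) (auto simp: Asets)
    also have "\<dots> \<le> (\<Prod>k\<in>{..<K}. 1 - q)"
      by (intro prod_mono) (auto simp: Fk)
    finally show ?thesis by simp
  qed
  define N where "N = (\<Inter>k. F k)"
  have Fev: "F k \<in> P.events" for k
    unfolding F_def using ind unfolding P.indep_vars_def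
    by (intro measurable_sets[of _ ?M "PiM (S k) (\<lambda>_. Mc)"] Asets) auto
  have Nev: "N \<in> P.events" unfolding N_def using Fev by auto
  have "P.prob N \<le> 0"
  proof (rule LIMSEQ_le_const)
    show "(\<lambda>K. (1 - q)^K) \<longlonglongrightarrow> 0" using q by (intro LIMSEQ_power_zero) auto
    show "\<exists>N0. \<forall>K\<ge>N0. P.prob N \<le> (1 - q)^K"
    proof (intro exI allI impI)
      fix K :: nat assume "1 \<le> K"
      have "P.prob N \<le> P.prob (\<Inter>k\<in>{..<K}. F k)"
        using Fev \<open>1 \<le> K\<close> unfolding N_def by (intro P.finite_measure_mono) (auto intro!: sets.finite_INT simp: lessThan_empty_iff)
      also have "\<dots> \<le> (1 - q)^K" using bound \<open>1 \<le> K\<close> by auto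
      finally show "P.prob N \<le> (1 - q)^K" .
    qed
  qed
  then have "N \<in> null_sets ?M" using Nev
    using measure_nonneg[of ?M N] by (simp add: null_sets_def P.emeasure_eq_measure)
  moreover have "{w \<in> space ?M. \<not> (\<exists>k. \<forall>n\<in>S k. w n = (n = p k))} \<subseteq> N"
    unfolding N_def F_def A_def by (auto simp: space_PiM PiE_iff Mc_def)
  ultimately show ?thesis unfolding cs by (rule AE_I')
qed



lemma base_inj:
  fixes d e :: "nat \<Rightarrow> nat"
  assumes "\<forall>j<s. d j < B" "\<forall>j<s. e j < B" "(\<Sum>j<s. d j * B^j) = (\<Sum>j<s. e j * B^j)"
  shows "\<forall>j<s. d j = e j"
  using assms
proof (induction s arbitrary: d e)
  case 0 then show ?case by simp
next
  case (Suc s)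
  have d0: "d 0 < B" "e 0 < B" using Suc.prems(1,2) by auto
  then have B: "B > 0" by simp
  have split: "(\<Sum>j<Suc s. f j * B^j) = f 0 + B * (\<Sum>j<s. f (Suc j) * B^j)" for f :: "nat \<Rightarrow> nat"
    by (simp only: sum.lessThan_Suc_shift power_Suc power_0) (simp add: sum_distrib_left ac_simps)
  have eq: "d 0 + B * (\<Sum>j<s. d (Suc j) * B^j) = e 0 + B * (\<Sum>j<s. e (Suc j) * B^j)"
    using Suc.prems(3) by (simp only: split)
  have "(d 0 + B * (\<Sum>j<s. d (Suc j) * B^j)) mod B = (e 0 + B * (\<Sum>j<s. e (Suc j) * B^j)) mod B"
    using eq by simp
  then have h0: "d 0 = e 0" using d0 by simp
  then have se: "(\<Sum>j<s. d (Suc j) * B^j) = (\<Sum>j<s. e (Suc j) * B^j)" using eq B by simp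
  have ds: "\<forall>j<s. d (Suc j) < B" using Suc.prems(1) by simp
  have es: "\<forall>j<s. e (Suc j) < B" using Suc.prems(2) by simp
  have "\<forall>j<s. d (Suc j) = e (Suc j)"
    by (rule Suc.IH[OF ds es se])
  then show ?case using h0 by (metis less_Suc_eq_0_disj)
qed

lemma base_bound:
  fixes d :: "nat \<Rightarrow> nat"
  assumes "\<forall>j<s. d j < B"
  shows "(\<Sum>j<s. d j * B^j) < B^s"
  using assms
proof (induction s)
  case 0 then show ?case by simp
next
  case (Suc s)
  have "(\<Sum>j<Suc s. d j * B^j) = (\<Sum>j<s. d j * B^j) + d s * B^s" by simp
  also have "\<dots> < B^s + d s * B^s" using Suc by auto
  also have "\<dots> = (d s + 1) * B^s" by simp
  also have "\<dots> \<le> B * B^s" using Suc.prems by (intro mult_right_mono) auto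
  finally show ?case by simp
qed

lemma base_pos:
  fixes d :: "nat \<Rightarrow> nat"
  assumes "j < s" "d j \<noteq> 0" "B > 0"
  shows "(\<Sum>j<s. d j * B^j) \<ge> 1"
proof -
  have "1 \<le> d j * B^j" using assms by simp
  also have "\<dots> \<le> (\<Sum>j<s. d j * B^j)" using assms by (intro member_le_sum) auto
  finally show ?thesis .
qed



lemma config_AE:
  fixes s u v :: nat and a0 :: "nat \<Rightarrow> nat" and a :: "nat \<Rightarrow> nat \<Rightarrow> nat" and c :: "nat \<Rightarrow> nat"
  assumes a01: "\<forall>j<s. a0 j \<in> {0,1}" and ex: "\<exists>j<s. a0 j \<noteq> 0"
    and neq: "\<forall>i\<in>{1..u}. \<not> ((\<forall>j<s. a i j = a0 j) \<and> c i = 0)"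
  shows "AE w in coin_space. \<exists>x y. (\<forall>j<s. v \<le> x j \<and> v \<le> y j) \<and>
         (dotp s a0 x \<in> {n. w n} \<longleftrightarrow> dotp s a0 y \<notin> {n. w n}) \<and>
         (\<forall>i\<in>{1..u}. (int (dotp s (a i) x) - int (c i) \<in> int ` {n. w n}
                        \<longleftrightarrow> int (dotp s (a i) y) - int (c i) \<in> int ` {n. w n}))"
proof -
  define A where "A = (\<Sum>j<s. a0 j) + (\<Sum>i\<in>{1..u}. \<Sum>j<s. a i j) + 1"
  define C where "C = (\<Sum>i\<in>{1..u}. c i)"
  define T where "T = A * A^s + C + v + 2"
  define X where "X k = T^(2*k+2)" for k :: nat
  define Y where "Y k = T^(2*k+1)" for k :: nat
  define xk where "xk k = (\<lambda>j::nat. X k * A^j)" for k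
  define yk where "yk k = (\<lambda>j::nat. Y k)" for k
  define val where "val b = (\<Sum>j<s. b j * A^j)" for b :: "nat \<Rightarrow> nat"
  define nrm where "nrm b = (\<Sum>j<s. b j)" for b :: "nat \<Rightarrow> nat"
  define Z where "Z = {i\<in>{1..u}. \<exists>j<s. a i j \<noteq> 0}"
  define p where "p k = dotp s a0 (xk k)" for k
  define S where "S k = {p k, dotp s a0 (yk k)} \<union> (\<lambda>i. dotp s (a i) (xk k) - c i) ` Z
     \<union> (\<lambda>i. dotp s (a i) (yk k) - c i) ` Z" for k

  have nrm_a0: "nrm a0 < A" unfolding nrm_def A_def by simp
  have nrm_a: "nrm (a i) < A" if "i \<in> {1..u}" for i
  proof -
    have "nrm (a i) \<le> (\<Sum>i\<in>{1..u}. \<Sum>j<s. a i j)" unfolding nrm_def using that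
      by (intro member_le_sum[where f="\<lambda>i. \<Sum>j<s. a i j"]) auto
    then show ?thesis unfolding A_def by simp
  qed
  have dig: "\<forall>j<s. b j < A" if "nrm b < A" for b
  proof (intro allI impI)
    fix j assume "j < s"
    then have "b j \<le> nrm b" unfolding nrm_def by (intro member_le_sum) auto
    then show "b j < A" using that by simp
  qed
  have nrmpos: "1 \<le> nrm b" if "j < s" "b j \<noteq> 0" for b j
  proof -
    have "b j \<le> nrm b" unfolding nrm_def using that by (intro member_le_sum) auto
    then show ?thesis using that by simp
  qed
  obtain j0 where j0: "j0 < s" "a0 j0 \<noteq> 0" using ex by auto
  have A2: "A \<ge> 2" using nrm_a0 nrmpos[where b=a0 and j=j0, OF j0] by simp
  have As: "A^s \<ge> 1" using A2 by simp
  have AAs: "A^s \<le> A * A^s" using A2 by simp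
  have "A \<le> A * A^s" using As by simp
  then have TA: "T > A" unfolding T_def by linarith
  have TC: "T > C" "T > v" unfolding T_def by auto
  have Tbig: "T \<ge> A^s + C + 1" using AAs unfolding T_def by linarith
  have T1: "T \<ge> 1" using TC by simp
  have valb: "val b < A^s" if "nrm b < A" for b
    unfolding val_def using base_bound dig[OF that] by blast
  have valpos: "1 \<le> val b" if "j < s" "b j \<noteq> 0" for b j
    unfolding val_def using base_pos[where d=b and j=j and s=s and B=A] that A2 by simp
  have valinj: "\<forall>j<s. b j = a0 j" if "val b = val a0" "nrm b < A" for b
    using base_inj[OF dig[OF that(2)] dig[OF nrm_a0]] that(1) unfolding val_def by blast
  have dx: "dotp s b (xk k) = X k * val b" for b k
    unfolding dotp_def val_def xk_def by (simp add: sum_distrib_left ac_simps)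
  have dy: "dotp s b (yk k) = Y k * nrm b" for b k
    unfolding dotp_def nrm_def yk_def by (simp add: sum_distrib_left ac_simps)
  have XY: "X k = T * Y k" for k unfolding X_def Y_def by simp
  have YT: "Y k \<ge> T" for k
  proof -
    have "T * 1 \<le> T * T^(2*k)" using T1 by (intro mult_left_mono) auto
    then show ?thesis unfolding Y_def by simp
  qed
  have YX: "Y k \<le> X k" for k using XY T1 by simp
  have cC: "c i \<le> C" if "i \<in> {1..u}" for i
    unfolding C_def using that by (intro member_le_sum) auto
  have X1: "X k \<ge> 1" for k using YT T1 YX by (meson le_trans)
  have P1: "X k \<le> p k" "p k \<le> X k * A^s" for k
  proof -
    have "1 \<le> val a0" using valpos[where b=a0 and j=j0, OF j0] .
    then show "X k \<le> p k" unfolding p_def dx by simp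
    have "val a0 \<le> A^s" using valb[OF nrm_a0] by simp
    then show "p k \<le> X k * A^s" unfolding p_def dx by simp
  qed
  have P3: "dotp s a0 (yk k) < X k" "Y k \<le> dotp s a0 (yk k)" for k
  proof -
    have "Y k * nrm a0 < Y k * T" using nrm_a0 TA YT[of k] T1
      by (intro mult_strict_left_mono) auto
    then show "dotp s a0 (yk k) < X k" unfolding dy XY by (simp add: ac_simps)
    show "Y k \<le> dotp s a0 (yk k)" unfolding dy using nrmpos[where b=a0 and j=j0, OF j0] by simp
  qed
  have P4: "dotp s (a i) (yk k) - c i < X k" "Y k - C \<le> dotp s (a i) (yk k) - c i"
       "c i \<le> dotp s (a i) (yk k)" if "i \<in> Z" for i k
  proof -
    have i: "i \<in> {1..u}" and ja: "\<exists>j<s. a i j \<noteq> 0" using that unfolding Z_def by auto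
    have "Y k * nrm (a i) < Y k * T" using nrm_a[OF i] TA YT[of k] T1
      by (intro mult_strict_left_mono) auto
    then show "dotp s (a i) (yk k) - c i < X k" unfolding dy XY
      by (metis diff_le_self le_less_trans mult.commute)
    have Yd: "Y k \<le> dotp s (a i) (yk k)" unfolding dy using ja nrmpos by auto
    then show "Y k - C \<le> dotp s (a i) (yk k) - c i" using cC[OF i] by linarith
    show "c i \<le> dotp s (a i) (yk k)" using Yd cC[OF i] YT[of k] TC by linarith
  qed
  have P5: "dotp s (a i) (xk k) - c i \<noteq> p k" "dotp s (a i) (xk k) - c i \<le> X k * A^s"
       "Y k - C \<le> dotp s (a i) (xk k) - c i" "c i \<le> dotp s (a i) (xk k)" if "i \<in> Z" for i k
  proof -
    have i: "i \<in> {1..u}" and ja: "\<exists>j<s. a i j \<noteq> 0" using that unfolding Z_def by auto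
    have ci: "c i < X k" using cC[OF i] TC YT[of k] YX[of k] by linarith
    have v1: "1 \<le> val (a i)" using ja valpos by auto
    have "X k \<le> X k * val (a i)" using v1 by simp
    show "dotp s (a i) (xk k) - c i \<noteq> p k"
    proof (cases "val (a i) = val a0")
      case True
      then have "\<forall>j<s. a i j = a0 j" using valinj nrm_a[OF i] by blast
      then have "c i \<noteq> 0" using bspec[OF neq i] by simp
      moreover have "c i < X k * val a0" using ci \<open>X k \<le> X k * val (a i)\<close> True by (metis less_le_trans)
      ultimately show ?thesis unfolding p_def dx True by simp
    next
      case False
      show ?thesis
      proof (cases "val (a i) < val a0")
        case True
        then have "X k * val (a i) < X k * val a0" using X1[of k] by simp
        then show ?thesis unfolding p_def dx by linarith
      next
        case F2: False
        with False have "val a0 + 1 \<le> val (a i)" by simp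
        then have "X k * (val a0 + 1) \<le> X k * val (a i)" by (intro mult_left_mono) auto
        then show ?thesis unfolding p_def dx using ci by (simp add: algebra_simps)
      qed
    qed
    have "val (a i) \<le> A^s" using valb[OF nrm_a[OF i]] by simp
    then show "dotp s (a i) (xk k) - c i \<le> X k * A^s" unfolding dx
      by (metis diff_le_self le_trans mult_le_mono2)
    show "Y k - C \<le> dotp s (a i) (xk k) - c i" unfolding dx
      using \<open>X k \<le> X k * val (a i)\<close> YX[of k] cC[OF i] by linarith
    show "c i \<le> dotp s (a i) (xk k)" unfolding dx
      using \<open>X k \<le> X k * val (a i)\<close> ci by linarith
  qed
  define lo where "lo k = Y k - C" for k
  define hi where "hi k = X k * A^s" for k
  have Srange: "n \<in> S k \<Longrightarrow> lo k \<le> n \<and> n \<le> hi k" for n k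
  proof -
    assume n: "n \<in> S k"
    have XXA: "X k \<le> X k * A^s" using As by simp
    then have YXA: "Y k \<le> X k * A^s" using YX[of k] by linarith
    consider "n = p k" | "n = dotp s a0 (yk k)" | i where "i \<in> Z" "n = dotp s (a i) (xk k) - c i"
      | i where "i \<in> Z" "n = dotp s (a i) (yk k) - c i"
      using n unfolding S_def by blast
    then show ?thesis
    proof cases
      case 1 then show ?thesis using P1[of k] YX[of k] unfolding lo_def hi_def by (intro conjI; linarith)
    next
      case 2 then show ?thesis using P3[of k] YXA XXA unfolding lo_def hi_def by (intro conjI; linarith)
    next
      case 3 then show ?thesis using P5[OF 3(1), of k] unfolding lo_def hi_def by (intro conjI; linarith)
    next
      case 4 then show ?thesis using P4[OF 4(1), of k] YXA XXA unfolding lo_def hi_def by (intro conjI; linarith)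
    qed
  qed
  have hilo: "hi k < lo (Suc k)" for k
  proof -
    have "Y (Suc k) = T * X k" unfolding X_def Y_def by simp
    moreover have "T * X k \<ge> (A^s + C + 1) * X k" using Tbig by (intro mult_right_mono) auto
    moreover have "(A^s + C + 1) * X k = A^s * X k + C * X k + X k" by (simp add: algebra_simps)
    moreover have "C * X k \<ge> C" using X1 by simp
    ultimately show ?thesis unfolding hi_def lo_def using X1[of k] mult.commute[of "X k" "A^s"] by linarith
  qed
  have lohi: "lo k \<le> hi k" for k
    unfolding lo_def hi_def using YX As by (metis diff_le_self le_trans mult_le_mono2 nat_mult_1_right)
  have smono: "strict_mono lo"
    by (rule strict_mono_Suc_iff[THEN iffD2]) (use lohi hilo le_less_trans in blast)
  have sep: "hi k < lo k'" if "k < k'" for k k'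
  proof -
    have "lo (Suc k) \<le> lo k'" using that smono by (simp add: strict_mono_less_eq)
    then show ?thesis using hilo[of k] by simp
  qed
  have disj: "disjoint_family S"
    unfolding disjoint_family_on_def
  proof (intro ballI impI)
    fix m n :: nat assume "m \<noteq> n"
    then have "m < n \<or> n < m" by auto
    then show "S m \<inter> S n = {}"
    proof
      assume "m < n"
      then show ?thesis using sep[of m n] Srange[of _ m] Srange[of _ n] by (meson disjoint_iff le_less_trans not_le)
    next
      assume "n < m"
      then show ?thesis using sep[of n m] Srange[of _ m] Srange[of _ n] by (meson disjoint_iff le_less_trans not_le)
    qed
  qed
  have finS: "finite (S k)" for k
    unfolding S_def Z_def by auto
  have finZ: "finite Z" unfolding Z_def by auto
  have cardZ: "card Z \<le> u"
  proof -
    have "card Z \<le> card {1..u}" unfolding Z_def by (intro card_mono) auto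
    then show ?thesis by simp
  qed
  have cardS: "card (S k) \<le> 2 + 2 * u" for k
  proof -
    have "card (S k) \<le> card {p k, dotp s a0 (yk k)} + card ((\<lambda>i. dotp s (a i) (xk k) - c i) ` Z)
        + card ((\<lambda>i. dotp s (a i) (yk k) - c i) ` Z)"
      unfolding S_def by (rule order_trans[OF card_Un_le]) (intro add_mono card_Un_le order_refl)
    moreover have "card {p k, dotp s a0 (yk k)} \<le> 2" by (simp add: card_insert_if)
    moreover have "card ((\<lambda>i. dotp s (a i) (xk k) - c i) ` Z) \<le> u"
      using le_trans[OF card_image_le[OF finZ] cardZ] .
    moreover have "card ((\<lambda>i. dotp s (a i) (yk k) - c i) ` Z) \<le> u"
      using le_trans[OF card_image_le[OF finZ] cardZ] .
    ultimately show ?thesis by linarith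
  qed
  have AEk: "AE w in coin_space. \<exists>k. \<forall>n\<in>S k. w n = (n = p k)"
    by (rule trials_AE[OF finS cardS disj])
  show ?thesis
  proof (rule AE_mp[OF AEk], rule AE_I2, rule impI, elim exE)
    fix w k assume succ: "\<forall>n\<in>S k. w n = (n = p k)"
    have wp: "w (p k)" using succ unfolding S_def by auto
    have wy: "\<not> w (dotp s a0 (yk k))" using succ P1[of k] P3[of k] unfolding S_def by auto
    have entries: "\<forall>j<s. v \<le> xk k j \<and> v \<le> yk k j"
    proof (intro allI impI conjI)
      fix j
      have "1 \<le> A^j" using A2 by simp
      then have "X k \<le> xk k j" unfolding xk_def by simp
      then show "v \<le> xk k j" using YT[of k] YX[of k] TC by linarith
      show "v \<le> yk k j" unfolding yk_def using YT[of k] TC by linarith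
    qed
    have comp: "int (dotp s (a i) (xk k)) - int (c i) \<in> int ` {n. w n}
          \<longleftrightarrow> int (dotp s (a i) (yk k)) - int (c i) \<in> int ` {n. w n}" if i: "i \<in> {1..u}" for i
    proof (cases "i \<in> Z")
      case False
      then have "\<forall>j<s. a i j = 0" using i unfolding Z_def by auto
      then have "dotp s (a i) (xk k) = 0" "dotp s (a i) (yk k) = 0" unfolding dotp_def by auto
      then show ?thesis by simp
    next
      case True
      have e1: "int (dotp s (a i) (xk k)) - int (c i) = int (dotp s (a i) (xk k) - c i)"
        using P5(4)[OF True, of k] by (simp add: of_nat_diff)
      have e2: "int (dotp s (a i) (yk k)) - int (c i) = int (dotp s (a i) (yk k) - c i)"
        using P4(3)[OF True, of k] by (simp add: of_nat_diff)
      have n1: "\<not> w (dotp s (a i) (xk k) - c i)" using succ P5(1)[OF True, of k] True unfolding S_def by auto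
      have n2: "\<not> w (dotp s (a i) (yk k) - c i)" using succ P4(1)[OF True, of k] P1[of k] True unfolding S_def by auto
      show ?thesis unfolding e1 e2 using n1 n2 by (auto simp: image_iff)
    qed
    show "\<exists>x y. (\<forall>j<s. v \<le> x j \<and> v \<le> y j) \<and>
         (dotp s a0 x \<in> {n. w n} \<longleftrightarrow> dotp s a0 y \<notin> {n. w n}) \<and>
         (\<forall>i\<in>{1..u}. (int (dotp s (a i) x) - int (c i) \<in> int ` {n. w n}
                        \<longleftrightarrow> int (dotp s (a i) y) - int (c i) \<in> int ` {n. w n}))"
      using entries wp wy comp unfolding p_def by blast
  qed
qed



definition hypR :: "nat \<Rightarrow> nat \<Rightarrow> (nat \<Rightarrow> nat) \<Rightarrow> (nat \<Rightarrow> nat \<Rightarrow> nat) \<Rightarrow> (nat \<Rightarrow> nat) \<Rightarrow> bool" where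
  "hypR s u a0 a c \<longleftrightarrow> (\<forall>j<s. a0 j \<in> {0, 1}) \<and> (\<exists>j<s. a0 j \<noteq> 0) \<and>
      (\<forall>i\<in>{1..u}. \<not> ((\<forall>j<s. a i j = a0 j) \<and> c i = 0))"

definition goodR :: "nat set \<Rightarrow> nat \<Rightarrow> nat \<Rightarrow> nat \<Rightarrow> (nat \<Rightarrow> nat) \<Rightarrow> (nat \<Rightarrow> nat \<Rightarrow> nat) \<Rightarrow> (nat \<Rightarrow> nat) \<Rightarrow> bool" where
  "goodR R s u v a0 a c \<longleftrightarrow> (\<exists>x y :: nat \<Rightarrow> nat. (\<forall>j<s. v \<le> x j \<and> v \<le> y j) \<and>
         (dotp s a0 x \<in> R \<longleftrightarrow> dotp s a0 y \<notin> R) \<and>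
         (\<forall>i\<in>{1..u}. (int (dotp s (a i) x) - int (c i) \<in> int ` R
                        \<longleftrightarrow> int (dotp s (a i) y) - int (c i) \<in> int ` R)))"

lemma rich_iff: "rich R \<longleftrightarrow> (\<forall>s u v a0 a c. hypR s u a0 a c \<longrightarrow> goodR R s u v a0 a c)"
  unfolding rich_def hypR_def goodR_def by blast

lemma dotp_cong: "(\<forall>j<s. b j = b' j) \<Longrightarrow> dotp s b x = dotp s b' x"
  unfolding dotp_def by (intro sum.cong) auto

definition keyR :: "nat \<Rightarrow> nat \<Rightarrow> nat \<Rightarrow> (nat \<Rightarrow> nat) \<Rightarrow> (nat \<Rightarrow> nat \<Rightarrow> nat) \<Rightarrow> (nat \<Rightarrow> nat)
    \<Rightarrow> nat \<times> nat \<times> nat \<times> nat list \<times> nat list list \<times> nat list" where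
  "keyR s u v a0 a c = (s, u, v, map a0 [0..<s], map (\<lambda>i. map (a i) [0..<s]) [0..<Suc u], map c [0..<Suc u])"

lemma keyR_eq:
  assumes "keyR s u v a0 a c = keyR s' u' v' a0' a' c'"
  shows "s' = s" "u' = u" "v' = v" "\<forall>j<s. a0 j = a0' j" "\<forall>i\<in>{1..u}. \<forall>j<s. a i j = a' i j"
    "\<forall>i\<in>{1..u}. c i = c' i"
  using assms unfolding keyR_def by (auto simp: map_eq_conv simp del: upt_Suc)

lemma cong_R:
  assumes "\<forall>j<s. a0 j = a0' j" "\<forall>i\<in>{1..u}. \<forall>j<s. a i j = a' i j" "\<forall>i\<in>{1..u}. c i = c' i"
  shows "hypR s u a0 a c = hypR s u a0' a' c'" "goodR R s u v a0 a c = goodR R s u v a0' a' c'"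
proof -
  show "hypR s u a0 a c = hypR s u a0' a' c'"
    unfolding hypR_def using assms by auto
  have d0: "dotp s a0 x = dotp s a0' x" for x using assms(1) by (rule dotp_cong)
  have d1: "dotp s (a i) x = dotp s (a' i) x" if "i \<in> {1..u}" for i x
    using assms(2) that by (intro dotp_cong) auto
  have c1: "c i = c' i" if "i \<in> {1..u}" for i using assms(3) that by auto
  show "goodR R s u v a0 a c = goodR R s u v a0' a' c'"
    unfolding goodR_def d0 using d1 c1 by (intro ex_cong1 conj_cong refl ball_cong) auto
qed

theorem proposition6p7:
  shows "AE w in coin_space. rich {n. w n}"
proof -
  define P where "P k w \<longleftrightarrow> (\<forall>s u v a0 a c. keyR s u v a0 a c = k \<longrightarrow> hypR s u a0 a c \<longrightarrow> goodR {n. w n} s u v a0 a c)" for k w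
  have "AE w in coin_space. P k w" for k
  proof (cases "\<exists>s u v a0 a c. keyR s u v a0 a c = k \<and> hypR s u a0 a c")
    case True
    then obtain s u v a0 a c where k: "keyR s u v a0 a c = k" and h: "hypR s u a0 a c" by blast
    have "AE w in coin_space. goodR {n. w n} s u v a0 a c"
      using config_AE[of s a0 u a c v] h unfolding hypR_def goodR_def by blast
    then show ?thesis
    proof (rule eventually_mono)
      fix w assume g: "goodR {n. w n} s u v a0 a c"
      show "P k w" unfolding P_def
      proof (intro allI impI)
        fix s' u' v' a0' a' c' assume k': "keyR s' u' v' a0' a' c' = k" and "hypR s' u' a0' a' c'"
        note e = keyR_eq[OF k'[folded k]]
        show "goodR {n. w n} s' u' v' a0' a' c'"
          using g cong_R(2)[OF e(4-6), of "{n. w n}" v] e(1-3) by simp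
      qed
    qed
  next
    case False
    then show ?thesis unfolding P_def by auto
  qed
  then have "AE w in coin_space. \<forall>k. P k w" by (simp add: AE_all_countable)
  then show ?thesis
  proof (rule eventually_mono)
    fix w assume "\<forall>k. P k w"
    then show "rich {n. w n}" unfolding rich_iff P_def by blast
  qed
qed

end
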